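(* The bidual $\mathcal R^{**}$ of Read's space $\mathcal R=(c_0,|||\cdot|||)$ is strictly convex; that is, for all $\bar x,\bar y$ in the unit sphere of $\mathcal R^{**}$ with $\bar x\ne\bar y$ one has $|||\bar x+\bar y|||<2$ (bidual norm).
   Context: Let $c_{00}(\mathbb Q)$ be the set of finitely supported sequences with rational coefficients, and let $(u_n)_{n\in\mathbb N}$ be a sequence in $c_{00}(\mathbb Q)$ which lists every element of $c_{00}(\mathbb Q)$ infinitely many times. Let $(a_n)_{n\in\mathbb N}$ be a strictly increasing sequence of positive integers with $a_n>\max\operatorname{supp} u_n$ and $a_n>\|u_n\|_1$ for every $n$. $(e_n)$ denotes the canonical unit vectors and $\langle x,y\rangle=\sum_n x_ny_n$. Read's norm on $c_0$ is $|||x||| = \|x\|_\infty + \sum_{n} 2^{-a_n^2}|\langle x, u_n - e_{a_n}\rangle|$, and Read's space is $\mathcal R=(c_0,|||\cdot|||)$ (real scalars). A Banach space is strictly convex if its unit sphere contains no nontrivial segment. *)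

theory Defs
  imports "HOL-Analysis.Analysis"
begin

definition c00Q :: "(nat \<Rightarrow> real) set" where
  "c00Q = {v. finite {i. v i \<noteq> 0} \<and> (\<forall>i. v i \<in> \<rat>)}"

definition c0seq :: "(nat \<Rightarrow> real) set" where
  "c0seq = {x. x \<longlonglongrightarrow> 0}"

definition unit_vec :: "nat \<Rightarrow> nat \<Rightarrow> real" where
  "unit_vec k = (\<lambda>i. if i = k then 1 else 0)"

definition seq_inner :: "(nat \<Rightarrow> real) \<Rightarrow> (nat \<Rightarrow> real) \<Rightarrow> real" where
  "seq_inner x y = (\<Sum>i. x i * y i)"

definition sup_norm :: "(nat \<Rightarrow> real) \<Rightarrow> real" where
  "sup_norm x = (SUP i. \<bar>x i\<bar>)"

definition l1_norm :: "(nat \<Rightarrow> real) \<Rightarrow> real" where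
  "l1_norm x = (\<Sum>i. \<bar>x i\<bar>)"

text \<open>Read's norm, for given parameters u (enumeration of c00(Q)) and a.\<close>
definition read_norm :: "(nat \<Rightarrow> nat \<Rightarrow> real) \<Rightarrow> (nat \<Rightarrow> nat) \<Rightarrow> (nat \<Rightarrow> real) \<Rightarrow> real" where
  "read_norm u a x = sup_norm x +
     (\<Sum>n. (1/2) ^ ((a n)^2) * \<bar>seq_inner x (\<lambda>i. u n i - unit_vec (a n) i)\<bar>)"

definition read_dual :: "(nat \<Rightarrow> nat \<Rightarrow> real) \<Rightarrow> (nat \<Rightarrow> nat) \<Rightarrow> ((nat \<Rightarrow> real) \<Rightarrow> real) set" where
  "read_dual u a = {f.
     (\<forall>x\<in>c0seq. \<forall>y\<in>c0seq. f (\<lambda>i. x i + y i) = f x + f y) \<and>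
     (\<forall>x\<in>c0seq. \<forall>c. f (\<lambda>i. c * x i) = c * f x) \<and>
     (\<exists>C. \<forall>x\<in>c0seq. \<bar>f x\<bar> \<le> C * read_norm u a x) \<and>
     (\<forall>x. x \<notin> c0seq \<longrightarrow> f x = 0)}"

definition dual_norm :: "(nat \<Rightarrow> nat \<Rightarrow> real) \<Rightarrow> (nat \<Rightarrow> nat) \<Rightarrow> ((nat \<Rightarrow> real) \<Rightarrow> real) \<Rightarrow> real" where
  "dual_norm u a f = (SUP x\<in>{x\<in>c0seq. read_norm u a x \<le> 1}. \<bar>f x\<bar>)"

definition read_bidual :: "(nat \<Rightarrow> nat \<Rightarrow> real) \<Rightarrow> (nat \<Rightarrow> nat) \<Rightarrow> (((nat \<Rightarrow> real) \<Rightarrow> real) \<Rightarrow> real) set" where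
  "read_bidual u a = {\<Phi>.
     (\<forall>f\<in>read_dual u a. \<forall>g\<in>read_dual u a. \<Phi> (\<lambda>x. f x + g x) = \<Phi> f + \<Phi> g) \<and>
     (\<forall>f\<in>read_dual u a. \<forall>c. \<Phi> (\<lambda>x. c * f x) = c * \<Phi> f) \<and>
     (\<exists>C. \<forall>f\<in>read_dual u a. \<bar>\<Phi> f\<bar> \<le> C * dual_norm u a f)}"

definition bidual_norm :: "(nat \<Rightarrow> nat \<Rightarrow> real) \<Rightarrow> (nat \<Rightarrow> nat) \<Rightarrow> (((nat \<Rightarrow> real) \<Rightarrow> real) \<Rightarrow> real) \<Rightarrow> real" where
  "bidual_norm u a \<Phi> = (SUP f\<in>{f\<in>read_dual u a. dual_norm u a f \<le> 1}. \<bar>\<Phi> f\<bar>)"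

end

theory Submission imports Defs begin

definition trunc :: "nat \<Rightarrow> (nat \<Rightarrow> real) \<Rightarrow> nat \<Rightarrow> real" where
  "trunc N x = (\<lambda>i. if i < N then x i else 0)"

definition delta :: "nat \<Rightarrow> (nat \<Rightarrow> real) \<Rightarrow> real" where
  "delta k = (\<lambda>x. if x \<in> c0seq then x k else 0)"

lemma c0_trunc: "trunc N x \<in> c0seq"
proof -
  have "eventually (\<lambda>i. trunc N x i = 0) sequentially"
    unfolding eventually_sequentially trunc_def by (rule exI[of _ N]) auto
  then have "trunc N x \<longlonglongrightarrow> 0" by (rule tendsto_eventually)
  then show ?thesis unfolding c0seq_def by simp
qed

lemma c0_add: "x \<in> c0seq \<Longrightarrow> y \<in> c0seq \<Longrightarrow> (\<lambda>i. x i + y i) \<in> c0seq"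
  unfolding c0seq_def using tendsto_add[of x 0 sequentially y 0] by simp

lemma c0_scale: "x \<in> c0seq \<Longrightarrow> (\<lambda>i. c * x i) \<in> c0seq"
  unfolding c0seq_def using tendsto_mult_right_zero by auto

lemma c0_zero: "(\<lambda>i. 0) \<in> c0seq"
  unfolding c0seq_def by simp

lemma c0_unit: "unit_vec k \<in> c0seq"
proof -
  have "trunc (Suc k) (unit_vec k) = unit_vec k" unfolding trunc_def unit_vec_def by auto
  then show ?thesis using c0_trunc by metis
qed

lemma c0_bounded: "x \<in> c0seq \<Longrightarrow> \<exists>B. \<forall>i. \<bar>x i\<bar> \<le> B"
proof -
  assume "x \<in> c0seq"
  then have "convergent x" unfolding c0seq_def convergent_def by auto
  then have "Bseq x" by (rule convergent_imp_Bseq)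
  then show ?thesis unfolding Bseq_def by (metis less_imp_le real_norm_def)
qed

lemma c0_tail: "x \<in> c0seq \<Longrightarrow> e > 0 \<Longrightarrow> \<exists>M. \<forall>i\<ge>M. \<bar>x i\<bar> < e"
  unfolding c0seq_def using LIMSEQ_D[of x 0 e] by auto

lemma seq_inner_finite:
  assumes "finite F" "\<And>k. k \<notin> F \<Longrightarrow> v k = 0"
  shows "seq_inner x v = (\<Sum>k\<in>F. x k * v k)"
  unfolding seq_inner_def by (rule suminf_finite) (use assms in auto)

lemma sup_norm_ge: "\<forall>i. \<bar>x i\<bar> \<le> B \<Longrightarrow> \<bar>x k\<bar> \<le> sup_norm x"
  unfolding sup_norm_def by (rule cSUP_upper) (auto intro!: bdd_aboveI2)

lemma sup_norm_le: "\<forall>i. \<bar>x i\<bar> \<le> B \<Longrightarrow> sup_norm x \<le> B"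
  unfolding sup_norm_def by (rule cSUP_least) auto

lemma two_pow_bound:
  fixes A N n :: nat
  assumes "A \<ge> N" "A \<ge> n + 1"
  shows "(A + 1) * 2 ^ (N + n) \<le> 2 * 2 ^ (A^2)"
proof -
  have h1: "A + 1 \<le> 2 ^ A" using less_exp[of A] by (simp add: Suc_le_eq)
  have h2: "N + n + A \<le> A^2 + 1"
  proof (cases "A \<le> 1")
    case True then have "A = 1" using assms by auto
    then show ?thesis using assms by (auto simp: power2_eq_square)
  next
    case False
    then have "A * A \<ge> 3 * A - 2" by (cases A) (auto simp: algebra_simps)
    then show ?thesis using assms by (auto simp: power2_eq_square)
  qed
  have "(A + 1) * 2 ^ (N + n) \<le> 2 ^ A * 2 ^ (N + n)" using h1 by (rule mult_right_mono) simp
  also have "\<dots> = 2 ^ (N + n + A)" by (simp add: power_add)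
  also have "\<dots> \<le> 2 ^ (A^2 + 1)" using h2 by (intro power_increasing) auto
  finally show ?thesis by simp
qed

locale readsp =
  fixes u :: "nat \<Rightarrow> nat \<Rightarrow> real" and a :: "nat \<Rightarrow> nat"
  assumes a_mono: "strict_mono a" and a_pos: "\<And>n. a n > 0"
    and a_supp: "\<And>n i. u n i \<noteq> 0 \<Longrightarrow> i < a n"
    and a_l1: "\<And>n. l1_norm (u n) < real (a n)"
begin

definition w :: "nat \<Rightarrow> real" where "w n = (1/2) ^ ((a n)^2)"
definition v :: "nat \<Rightarrow> nat \<Rightarrow> real" where "v n = (\<lambda>i. u n i - unit_vec (a n) i)"

abbreviation RN where "RN \<equiv> read_norm u a"

lemma w_pos: "w n > 0" unfolding w_def by simp

lemma RN_eq: "RN x = sup_norm x + (\<Sum>n. w n * \<bar>seq_inner x (v n)\<bar>)"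
  unfolding read_norm_def w_def v_def by simp

lemma a_ge: "a n \<ge> n + 1"
proof (induction n)
  case 0 then show ?case using a_pos[of 0] by simp
next
  case (Suc n)
  have "a n < a (Suc n)" using a_mono by (simp add: strict_mono_def)
  then show ?case using Suc by simp
qed

lemma v_zero: "i > a n \<Longrightarrow> v n i = 0"
  unfolding v_def unit_vec_def using a_supp[of n i] by auto

lemma inner_v: "seq_inner x (v n) = (\<Sum>k\<le>a n. x k * v n k)"
  by (rule seq_inner_finite) (auto intro: v_zero)

lemma inner_u: "seq_inner x (u n) = (\<Sum>k\<le>a n. x k * u n k)"
  by (rule seq_inner_finite) (use a_supp in force)+

lemma inner_v_split: "seq_inner x (v n) = seq_inner x (u n) - x (a n)"
proof -
  have "(\<Sum>k\<le>a n. x k * v n k) = (\<Sum>k\<le>a n. x k * u n k) - (\<Sum>k\<le>a n. x k * unit_vec (a n) k)"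
    by (simp add: v_def algebra_simps sum_subtractf)
  moreover have "(\<Sum>k\<le>a n. x k * unit_vec (a n) k) = x (a n)"
    by (simp add: unit_vec_def if_distrib[of "\<lambda>t. x _ * t"] cong: if_cong)
  ultimately show ?thesis unfolding inner_v[of x n] inner_u[of x n] by simp
qed

lemma l1v: "(\<Sum>k\<le>a n. \<bar>v n k\<bar>) \<le> real (a n) + 1"
proof -
  have "l1_norm (u n) = (\<Sum>k\<le>a n. \<bar>u n k\<bar>)"
    unfolding l1_norm_def by (rule suminf_finite) (use a_supp in force)+
  then have h: "(\<Sum>k\<le>a n. \<bar>u n k\<bar>) \<le> real (a n)" using a_l1[of n] by simp
  have "(\<Sum>k\<le>a n. \<bar>v n k\<bar>) \<le> (\<Sum>k\<le>a n. \<bar>u n k\<bar> + \<bar>unit_vec (a n) k\<bar>)"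
    unfolding v_def by (rule sum_mono) simp
  also have "\<dots> = (\<Sum>k\<le>a n. \<bar>u n k\<bar>) + 1"
    by (simp add: sum.distrib unit_vec_def)
  finally show ?thesis using h by simp
qed

lemma inner_bound:
  assumes "\<forall>i. \<bar>x i\<bar> \<le> B"
  shows "\<bar>seq_inner x (v n)\<bar> \<le> B * (real (a n) + 1)"
proof -
  have B0: "B \<ge> 0" using assms by (meson abs_ge_zero order_trans)
  have "\<bar>seq_inner x (v n)\<bar> \<le> (\<Sum>k\<le>a n. \<bar>x k * v n k\<bar>)"
    unfolding inner_v by (rule sum_abs)
  also have "\<dots> \<le> (\<Sum>k\<le>a n. B * \<bar>v n k\<bar>)"
    by (rule sum_mono) (simp add: abs_mult assms mult_right_mono)
  also have "\<dots> = B * (\<Sum>k\<le>a n. \<bar>v n k\<bar>)" by (simp add: sum_distrib_left)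
  also have "\<dots> \<le> B * (real (a n) + 1)" using l1v B0 by (simp add: mult_left_mono)
  finally show ?thesis .
qed

lemma wb: assumes "a n \<ge> N" shows "w n * (real (a n) + 1) \<le> 2 * (1/2) ^ (N + n)"
proof -
  have h: "(a n + 1) * 2 ^ (N + n) \<le> 2 * 2 ^ ((a n)^2)"
    using two_pow_bound[of N "a n" n] assms a_ge[of n] by simp
  then have h': "(real (a n) + 1) * 2 ^ (N + n) \<le> 2 * 2 ^ ((a n)^2)"
    by (metis (mono_tags, lifting) of_nat_1 of_nat_add of_nat_le_iff of_nat_mult of_nat_numeral of_nat_power)
  show ?thesis unfolding w_def using h'
    by (simp add: power_one_over field_simps)
qed

lemma wb0: "w n * (real (a n) + 1) \<le> 2 * (1/2) ^ n"
  using wb[of 0 n] by simp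

lemma geo: "(\<lambda>n. c * (1/2::real) ^ (N + n)) sums (2 * c * (1/2) ^ N)"
proof -
  have "(\<lambda>n. (1/2::real) ^ n) sums 2" using geometric_sums[of "1/2::real"] by simp
  then have "(\<lambda>n. (c * (1/2) ^ N) * (1/2::real) ^ n) sums ((c * (1/2) ^ N) * 2)"
    by (rule sums_mult)
  then show ?thesis by (simp add: power_add algebra_simps)
qed

lemma summable_terms:
  assumes "\<forall>i. \<bar>x i\<bar> \<le> B" "\<And>n. \<bar>c n\<bar> \<le> 1"
  shows "summable (\<lambda>n. w n * c n * seq_inner x (v n))"
proof -
  have B0: "B \<ge> 0" using assms by (meson abs_ge_zero order_trans)
  show ?thesis
  proof (rule summable_comparison_test'[where g="\<lambda>n. B * 2 * (1/2)^(0+n)" and N=0])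
    show "summable (\<lambda>n. B * 2 * (1/2::real) ^ (0 + n))" using geo sums_summable by blast
    fix n
    have "norm (w n * c n * seq_inner x (v n)) = w n * \<bar>c n\<bar> * \<bar>seq_inner x (v n)\<bar>"
      using w_pos[of n] by (simp add: abs_mult)
    also have "\<dots> \<le> w n * 1 * (B * (real (a n) + 1))"
      using w_pos[of n] assms inner_bound[OF assms(1)]
      by (intro mult_mono) (auto intro: mult_nonneg_nonneg)
    also have "\<dots> = B * (w n * (real (a n) + 1))" by simp
    also have "\<dots> \<le> B * (2 * (1/2)^n)" using wb0 B0 by (simp add: mult_left_mono)
    finally show "norm (w n * c n * seq_inner x (v n)) \<le> B * 2 * (1/2) ^ (0 + n)" by simp
  qed
qed

lemma summable_abs_terms:
  assumes "\<forall>i. \<bar>x i\<bar> \<le> B"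
  shows "summable (\<lambda>n. w n * \<bar>seq_inner x (v n)\<bar>)"
proof -
  have "summable (\<lambda>n. w n * sgn (seq_inner x (v n)) * seq_inner x (v n))"
    by (rule summable_terms[OF assms]) (simp add: abs_sgn_eq)
  moreover have "\<And>n. w n * sgn (seq_inner x (v n)) * seq_inner x (v n) = w n * \<bar>seq_inner x (v n)\<bar>"
    by (simp add: abs_sgn mult.assoc)
  ultimately show ?thesis by simp
qed

lemma sum_abs_bound:
  assumes "\<forall>i. \<bar>x i\<bar> \<le> B"
  shows "(\<Sum>n. w n * \<bar>seq_inner x (v n)\<bar>) \<le> 4 * B"
proof -
  have B0: "B \<ge> 0" using assms by (meson abs_ge_zero order_trans)
  have "(\<Sum>n. w n * \<bar>seq_inner x (v n)\<bar>) \<le> (\<Sum>n. B * 2 * (1/2)^(0+n))"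
  proof (rule suminf_le)
    show "summable (\<lambda>n. w n * \<bar>seq_inner x (v n)\<bar>)" by (rule summable_abs_terms[OF assms])
    show "summable (\<lambda>n. B * 2 * (1/2::real) ^ (0 + n))" using geo sums_summable by blast
    fix n
    have "w n * \<bar>seq_inner x (v n)\<bar> \<le> w n * (B * (real (a n) + 1))"
      using w_pos[of n] inner_bound[OF assms] by (simp add: mult_left_mono)
    also have "\<dots> = B * (w n * (real (a n) + 1))" by simp
    also have "\<dots> \<le> B * (2 * (1/2)^n)" using wb0 B0 by (simp add: mult_left_mono)
    finally show "w n * \<bar>seq_inner x (v n)\<bar> \<le> B * 2 * (1/2) ^ (0 + n)" by simp
  qed
  also have "\<dots> = 4 * B" using geo[of "B*2" 0] sums_unique by fastforce
  finally show ?thesis .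
qed

lemma RN_ge: assumes "\<forall>i. \<bar>x i\<bar> \<le> B" shows "\<bar>x k\<bar> \<le> RN x"
proof -
  have "0 \<le> (\<Sum>n. w n * \<bar>seq_inner x (v n)\<bar>)"
    by (rule suminf_nonneg[OF summable_abs_terms[OF assms]]) (simp add: w_pos less_imp_le)
  then show ?thesis unfolding RN_eq using sup_norm_ge[OF assms, of k] by simp
qed

lemma RN_nonneg: assumes "\<forall>i. \<bar>x i\<bar> \<le> B" shows "0 \<le> RN x"
  using RN_ge[OF assms, of 0] by simp

lemma RN_le: assumes "\<forall>i. \<bar>x i\<bar> \<le> B" shows "RN x \<le> 5 * B"
  unfolding RN_eq using sup_norm_le[OF assms] sum_abs_bound[OF assms] by simp

lemma RN_zero: "RN (\<lambda>i. 0) = 0"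
proof -
  have "RN (\<lambda>i. 0) \<le> 5 * 0" by (rule RN_le) simp
  moreover have "RN (\<lambda>i. 0) \<ge> 0" by (rule RN_nonneg[of _ 0]) simp
  ultimately show ?thesis by simp
qed

lemma inner_add: "seq_inner (\<lambda>i. x i + y i) (v n) = seq_inner x (v n) + seq_inner y (v n)"
  unfolding inner_v by (simp add: algebra_simps sum.distrib)

lemma inner_scale: "seq_inner (\<lambda>i. c * x i) (v n) = c * seq_inner x (v n)"
  unfolding inner_v by (simp add: algebra_simps sum_distrib_left)

lemma RN_scale_le:
  assumes "\<forall>i. \<bar>x i\<bar> \<le> B"
  shows "RN (\<lambda>i. c * x i) \<le> \<bar>c\<bar> * RN x"
proof -
  have "sup_norm (\<lambda>i. c * x i) \<le> \<bar>c\<bar> * sup_norm x"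
    unfolding sup_norm_def[of "\<lambda>i. c * x i"]
    by (rule cSUP_least) (auto simp: abs_mult intro!: mult_left_mono sup_norm_ge[OF assms])
  moreover have "(\<Sum>n. w n * \<bar>seq_inner (\<lambda>i. c * x i) (v n)\<bar>) = \<bar>c\<bar> * (\<Sum>n. w n * \<bar>seq_inner x (v n)\<bar>)"
    unfolding inner_scale using suminf_mult[OF summable_abs_terms[OF assms], of "\<bar>c\<bar>"]
    by (simp add: abs_mult algebra_simps)
  ultimately show ?thesis unfolding RN_eq by (simp add: algebra_simps)
qed

abbreviation D where "D \<equiv> read_dual u a"
abbreviation DN where "DN \<equiv> dual_norm u a"
abbreviation BD where "BD \<equiv> read_bidual u a"
abbreviation BN where "BN \<equiv> bidual_norm u a"

lemma dual_add: "f \<in> D \<Longrightarrow> x \<in> c0seq \<Longrightarrow> y \<in> c0seq \<Longrightarrow> f (\<lambda>i. x i + y i) = f x + f y"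
  unfolding read_dual_def by blast
lemma dual_scale: "f \<in> D \<Longrightarrow> x \<in> c0seq \<Longrightarrow> f (\<lambda>i. c * x i) = c * f x"
  unfolding read_dual_def by blast
lemma dual_out: "f \<in> D \<Longrightarrow> x \<notin> c0seq \<Longrightarrow> f x = 0"
  unfolding read_dual_def by blast

lemma RN_nonneg_c0: "x \<in> c0seq \<Longrightarrow> 0 \<le> RN x"
  using c0_bounded RN_nonneg by blast

lemma dual_C: assumes "f \<in> D" shows "\<exists>C\<ge>0. \<forall>x\<in>c0seq. \<bar>f x\<bar> \<le> C * RN x"
proof -
  obtain C where C: "\<forall>x\<in>c0seq. \<bar>f x\<bar> \<le> C * RN x" using assms unfolding read_dual_def by blast
  have "\<forall>x\<in>c0seq. \<bar>f x\<bar> \<le> max C 0 * RN x"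
  proof
    fix x assume x: "x \<in> c0seq"
    have "C * RN x \<le> max C 0 * RN x" using RN_nonneg_c0[OF x] by (simp add: mult_right_mono)
    then show "\<bar>f x\<bar> \<le> max C 0 * RN x" using C x by fastforce
  qed
  then show ?thesis by (intro exI[of _ "max C 0"]) auto
qed

lemma dual_zero: assumes "f \<in> D" shows "f (\<lambda>i. 0) = 0"
  using dual_scale[OF assms c0_zero, of 0] by simp

lemma dual_bdd: assumes "f \<in> D" shows "bdd_above ((\<lambda>x. \<bar>f x\<bar>) ` {x\<in>c0seq. RN x \<le> 1})"
proof -
  obtain C where C: "C \<ge> 0" "\<forall>x\<in>c0seq. \<bar>f x\<bar> \<le> C * RN x" using dual_C[OF assms] by blast
  show ?thesis
  proof (rule bdd_aboveI2)
    fix x assume "x \<in> {x\<in>c0seq. RN x \<le> 1}"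
    then show "\<bar>f x\<bar> \<le> C" using C by (smt (verit, best) mem_Collect_eq mult_left_le)
  qed
qed

lemma dual_norm_ge: "f \<in> D \<Longrightarrow> x \<in> c0seq \<Longrightarrow> RN x \<le> 1 \<Longrightarrow> \<bar>f x\<bar> \<le> DN f"
  unfolding dual_norm_def by (rule cSUP_upper[OF _ dual_bdd]) auto

lemma dual_norm_nonneg: "f \<in> D \<Longrightarrow> 0 \<le> DN f"
  using dual_norm_ge[OF _ c0_zero, of f] RN_zero by simp

lemma dual_norm_le: assumes "f \<in> D" "\<And>x. x \<in> c0seq \<Longrightarrow> RN x \<le> 1 \<Longrightarrow> \<bar>f x\<bar> \<le> K"
  shows "DN f \<le> K"
  unfolding dual_norm_def
proof (rule cSUP_least)
  show "{x \<in> c0seq. RN x \<le> 1} \<noteq> {}" using c0_zero RN_zero by auto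
qed (use assms in auto)

lemma dual_bound: assumes f: "f \<in> D" and x: "x \<in> c0seq" shows "\<bar>f x\<bar> \<le> DN f * RN x"
proof -
  obtain B where B: "\<forall>i. \<bar>x i\<bar> \<le> B" using c0_bounded[OF x] by blast
  show ?thesis
  proof (cases "RN x = 0")
    case True
    then have "\<forall>i. x i = 0" using RN_ge[OF B] by (metis abs_le_zero_iff)
    then have "x = (\<lambda>i. 0)" by auto
    then show ?thesis using dual_zero[OF f] True by simp
  next
    case False
    define r where "r = RN x"
    have r: "r > 0" using False RN_nonneg_c0[OF x] unfolding r_def by simp
    define y where "y = (\<lambda>i. (1/r) * x i)"
    have y: "y \<in> c0seq" unfolding y_def by (rule c0_scale[OF x])
    have "RN y \<le> \<bar>1/r\<bar> * RN x" unfolding y_def by (rule RN_scale_le[OF B])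
    then have "RN y \<le> 1" using r unfolding r_def by simp
    then have "\<bar>f y\<bar> \<le> DN f" by (rule dual_norm_ge[OF f y])
    moreover have "f y = (1/r) * f x" unfolding y_def by (rule dual_scale[OF f x])
    ultimately have "\<bar>f x\<bar> / r \<le> DN f" using r by (simp add: abs_mult)
    then show ?thesis using r unfolding r_def by (simp add: field_simps)
  qed
qed

lemma dual_comb: assumes f: "f \<in> D" and g: "g \<in> D" shows "(\<lambda>x. f x + c * g x) \<in> D"
proof -
  obtain C1 where C1: "C1 \<ge> 0" "\<forall>x\<in>c0seq. \<bar>f x\<bar> \<le> C1 * RN x" using dual_C[OF f] by blast
  obtain C2 where C2: "C2 \<ge> 0" "\<forall>x\<in>c0seq. \<bar>g x\<bar> \<le> C2 * RN x" using dual_C[OF g] by blast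
  have "\<forall>x\<in>c0seq. \<bar>f x + c * g x\<bar> \<le> (C1 + \<bar>c\<bar> * C2) * RN x"
  proof
    fix x assume x: "x \<in> c0seq"
    have "\<bar>f x + c * g x\<bar> \<le> \<bar>f x\<bar> + \<bar>c\<bar> * \<bar>g x\<bar>" by (simp add: abs_mult abs_triangle_ineq[THEN order_trans])
    also have "\<dots> \<le> C1 * RN x + \<bar>c\<bar> * (C2 * RN x)"
      using C1 C2 x by (intro add_mono mult_left_mono) auto
    finally show "\<bar>f x + c * g x\<bar> \<le> (C1 + \<bar>c\<bar> * C2) * RN x" by (simp add: algebra_simps)
  qed
  then have bnd: "\<exists>C. \<forall>x\<in>c0seq. \<bar>f x + c * g x\<bar> \<le> C * RN x" by blast
  have add: "\<forall>x\<in>c0seq. \<forall>y\<in>c0seq. f (\<lambda>i. x i + y i) + c * g (\<lambda>i. x i + y i) = (f x + c * g x) + (f y + c * g y)"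
    by (simp add: dual_add[OF f] dual_add[OF g] algebra_simps)
  have sc: "\<forall>x\<in>c0seq. \<forall>d. f (\<lambda>i. d * x i) + c * g (\<lambda>i. d * x i) = d * (f x + c * g x)"
    by (simp add: dual_scale[OF f] dual_scale[OF g] algebra_simps)
  have out: "\<forall>x. x \<notin> c0seq \<longrightarrow> f x + c * g x = 0"
    by (simp add: dual_out[OF f] dual_out[OF g])
  show ?thesis unfolding read_dual_def mem_Collect_eq using add sc out bnd by blast
qed

lemma zero_in: "(\<lambda>x. 0) \<in> D"
  unfolding read_dual_def by (auto intro: exI[of _ 0])

lemma RN_ge_c0: "x \<in> c0seq \<Longrightarrow> \<bar>x k\<bar> \<le> RN x"
  by (metis c0_bounded RN_ge)

lemma delta_in: "delta k \<in> D"
proof -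
  have "\<forall>x\<in>c0seq. \<bar>delta k x\<bar> \<le> 1 * RN x"
    using RN_ge_c0 unfolding delta_def by auto
  then show ?thesis unfolding read_dual_def delta_def
    by (auto simp: c0_add c0_scale intro!: exI[of _ 1])
qed

lemma delta_norm: "DN (delta k) \<le> 1"
  by (rule dual_norm_le[OF delta_in]) (simp add: delta_def, meson RN_ge_c0 order_trans)

lemma f_trunc: assumes f: "f \<in> D" shows "f (trunc N z) = (\<Sum>i<N. z i * f (unit_vec i))"
proof (induction N)
  case 0
  have "trunc 0 z = (\<lambda>i. 0)" unfolding trunc_def by simp
  then show ?case using dual_zero[OF f] by simp
next
  case (Suc N)
  have "trunc (Suc N) z = (\<lambda>i. trunc N z i + z N * unit_vec N i)"
    unfolding trunc_def unit_vec_def by (intro ext) (auto simp: less_Suc_eq)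
  then have "f (trunc (Suc N) z) = f (trunc N z) + f (\<lambda>i. z N * unit_vec N i)"
    using dual_add[OF f c0_trunc c0_scale[OF c0_unit]] by simp
  also have "f (\<lambda>i. z N * unit_vec N i) = z N * f (unit_vec N)" by (rule dual_scale[OF f c0_unit])
  finally show ?case using Suc by simp
qed

lemma bid_add: "\<Phi> \<in> BD \<Longrightarrow> f \<in> D \<Longrightarrow> g \<in> D \<Longrightarrow> \<Phi> (\<lambda>x. f x + g x) = \<Phi> f + \<Phi> g"
  unfolding read_bidual_def by blast
lemma bid_scale: "\<Phi> \<in> BD \<Longrightarrow> f \<in> D \<Longrightarrow> \<Phi> (\<lambda>x. c * f x) = c * \<Phi> f"
  unfolding read_bidual_def by blast

lemma scale_in: "f \<in> D \<Longrightarrow> (\<lambda>x. c * f x) \<in> D"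
  using dual_comb[OF zero_in, of f c] by simp

lemma bid_comb: "\<Phi> \<in> BD \<Longrightarrow> f \<in> D \<Longrightarrow> g \<in> D \<Longrightarrow> \<Phi> (\<lambda>x. f x + c * g x) = \<Phi> f + c * \<Phi> g"
  using bid_add[of \<Phi> f "\<lambda>x. c * g x"] bid_scale[of \<Phi> g c] scale_in[of g c] by simp

lemma bid_zero: "\<Phi> \<in> BD \<Longrightarrow> \<Phi> (\<lambda>x. 0) = 0"
  using bid_scale[OF _ zero_in, of \<Phi> 0] by simp

lemma bid_C: assumes "\<Phi> \<in> BD" shows "\<exists>C\<ge>0. \<forall>f\<in>D. \<bar>\<Phi> f\<bar> \<le> C * DN f"
proof -
  obtain C where C: "\<forall>f\<in>D. \<bar>\<Phi> f\<bar> \<le> C * DN f" using assms unfolding read_bidual_def by blast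
  have "\<forall>f\<in>D. \<bar>\<Phi> f\<bar> \<le> max C 0 * DN f"
  proof
    fix f assume f: "f \<in> D"
    have "C * DN f \<le> max C 0 * DN f" using dual_norm_nonneg[OF f] by (simp add: mult_right_mono)
    then show "\<bar>\<Phi> f\<bar> \<le> max C 0 * DN f" using C f by fastforce
  qed
  then show ?thesis by (intro exI[of _ "max C 0"]) auto
qed

lemma bid_bdd: assumes "\<Phi> \<in> BD" shows "bdd_above ((\<lambda>f. \<bar>\<Phi> f\<bar>) ` {f\<in>D. DN f \<le> 1})"
proof -
  obtain C where C: "C \<ge> 0" "\<forall>f\<in>D. \<bar>\<Phi> f\<bar> \<le> C * DN f" using bid_C[OF assms] by blast
  show ?thesis
  proof (rule bdd_aboveI2)
    fix f assume "f \<in> {f\<in>D. DN f \<le> 1}"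
    then show "\<bar>\<Phi> f\<bar> \<le> C" using C by (smt (verit, best) mem_Collect_eq mult_left_le)
  qed
qed

lemma bid_norm_ge: "\<Phi> \<in> BD \<Longrightarrow> f \<in> D \<Longrightarrow> DN f \<le> 1 \<Longrightarrow> \<bar>\<Phi> f\<bar> \<le> BN \<Phi>"
  unfolding bidual_norm_def by (rule cSUP_upper[OF _ bid_bdd]) auto

lemma zero_norm: "DN (\<lambda>x. 0) \<le> 1"
  by (rule dual_norm_le[OF zero_in]) auto

lemma fe_summable: assumes f: "f \<in> D" shows "summable (\<lambda>i. \<bar>f (unit_vec i)\<bar>)"
proof -
  obtain C where C: "C \<ge> 0" "\<forall>x\<in>c0seq. \<bar>f x\<bar> \<le> C * RN x" using dual_C[OF f] by blast
  show ?thesis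
  proof (rule summableI_nonneg_bounded)
    fix n
    define s where "s = (\<lambda>i. sgn (f (unit_vec i)))"
    have "(\<Sum>i<n. \<bar>f (unit_vec i)\<bar>) = (\<Sum>i<n. s i * f (unit_vec i))"
      unfolding s_def by (simp add: abs_sgn mult.commute)
    also have "\<dots> = f (trunc n s)" by (simp add: f_trunc[OF f])
    also have "\<dots> \<le> C * RN (trunc n s)" using C(2) c0_trunc[of n s] abs_ge_self order_trans by blast
    also have "\<dots> \<le> C * (5 * 1)"
    proof -
      have "\<forall>i. \<bar>trunc n s i\<bar> \<le> 1" unfolding trunc_def s_def by (simp add: abs_sgn_eq)
      then show ?thesis using C by (intro mult_left_mono RN_le) auto
    qed
    finally show "(\<Sum>i<n. \<bar>f (unit_vec i)\<bar>) \<le> C * (5 * 1)" .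
  qed simp
qed

lemma K1: assumes f: "f \<in> D" and x: "x \<in> c0seq" shows "(\<lambda>M. f (trunc M x)) \<longlonglongrightarrow> f x"
proof (rule LIMSEQ_I)
  fix r :: real assume r: "r > 0"
  obtain C where C: "C \<ge> 0" "\<forall>x\<in>c0seq. \<bar>f x\<bar> \<le> C * RN x" using dual_C[OF f] by blast
  define e where "e = r / (5 * (C + 1))"
  have e: "e > 0" unfolding e_def using r C by simp
  obtain M0 where M0: "\<forall>i\<ge>M0. \<bar>x i\<bar> < e" using c0_tail[OF x e] by blast
  show "\<exists>no. \<forall>n\<ge>no. norm (f (trunc n x) - f x) < r"
  proof (intro exI allI impI)
    fix M assume M: "M0 \<le> M"
    define t where "t = (\<lambda>i. if i < M then 0 else x i)"
    have t_eq: "t = (\<lambda>i. x i + (-1) * trunc M x i)" unfolding t_def trunc_def by auto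
    have t: "t \<in> c0seq" unfolding t_eq by (rule c0_add[OF x c0_scale[OF c0_trunc]])
    have "x = (\<lambda>i. trunc M x i + t i)" unfolding t_def trunc_def by auto
    then have "f x = f (trunc M x) + f t" using dual_add[OF f c0_trunc t] by metis
    then have "norm (f (trunc M x) - f x) = \<bar>f t\<bar>" by simp
    also have "\<dots> \<le> C * RN t" using C t by blast
    also have "\<dots> \<le> C * (5 * e)"
    proof -
      have "\<forall>i. \<bar>t i\<bar> \<le> e" unfolding t_def using M0 M e by (auto simp: less_imp_le)
      then show ?thesis using C by (intro mult_left_mono RN_le) auto
    qed
    also have "\<dots> < r" unfolding e_def using r C by (simp add: field_simps)
    finally show "norm (f (trunc M x) - f x) < r" .
  qed
qed

definition T :: "((nat \<Rightarrow> real) \<Rightarrow> real) \<Rightarrow> nat \<Rightarrow> real" where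
  "T f N = (\<Sum>i. \<bar>f (unit_vec i)\<bar>) - (\<Sum>i<N. \<bar>f (unit_vec i)\<bar>)"

lemma T_lim: "f \<in> D \<Longrightarrow> T f \<longlonglongrightarrow> 0"
proof -
  assume f: "f \<in> D"
  have "(\<lambda>N. (\<Sum>i. \<bar>f (unit_vec i)\<bar>) - (\<Sum>i<N. \<bar>f (unit_vec i)\<bar>)) \<longlonglongrightarrow> (\<Sum>i. \<bar>f (unit_vec i)\<bar>) - (\<Sum>i. \<bar>f (unit_vec i)\<bar>)"
    by (intro tendsto_diff tendsto_const summable_LIMSEQ fe_summable f)
  then show ?thesis unfolding T_def by simp
qed

lemma tailbound:
  assumes f: "f \<in> D" and x: "x \<in> c0seq" and x1: "\<forall>i. \<bar>x i\<bar> \<le> 1"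
  shows "\<bar>f x - (\<Sum>i<N. x i * f (unit_vec i))\<bar> \<le> T f N"
proof -
  have "(\<lambda>M. \<bar>f (trunc M x) - (\<Sum>i<N. x i * f (unit_vec i))\<bar>) \<longlonglongrightarrow> \<bar>f x - (\<Sum>i<N. x i * f (unit_vec i))\<bar>"
    by (intro tendsto_rabs tendsto_diff tendsto_const K1 f x)
  moreover have "\<exists>N0. \<forall>M\<ge>N0. \<bar>f (trunc M x) - (\<Sum>i<N. x i * f (unit_vec i))\<bar> \<le> T f N"
  proof (intro exI allI impI)
    fix M assume M: "N \<le> M"
    let ?g = "\<lambda>i. x i * f (unit_vec i)"
    let ?h = "\<lambda>i. \<bar>f (unit_vec i)\<bar>"
    have s1: "(\<Sum>i<M. ?g i) = (\<Sum>i<N. ?g i) + (\<Sum>i=N..<M. ?g i)"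
      using sum.atLeastLessThan_concat[of 0 N M ?g] M by (simp add: lessThan_atLeast0)
    have s2: "(\<Sum>i<M. ?h i) = (\<Sum>i<N. ?h i) + (\<Sum>i=N..<M. ?h i)"
      using sum.atLeastLessThan_concat[of 0 N M ?h] M by (simp add: lessThan_atLeast0)
    have "\<bar>f (trunc M x) - (\<Sum>i<N. ?g i)\<bar> = \<bar>\<Sum>i=N..<M. ?g i\<bar>"
      using s1 by (simp add: f_trunc[OF f])
    also have "\<dots> \<le> (\<Sum>i=N..<M. \<bar>?g i\<bar>)" by (rule sum_abs)
    also have "\<dots> \<le> (\<Sum>i=N..<M. ?h i)"
      by (rule sum_mono) (use x1 in \<open>auto simp: abs_mult intro: mult_left_le_one_le\<close>)
    also have "\<dots> = (\<Sum>i<M. ?h i) - (\<Sum>i<N. ?h i)" using s2 by simp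
    also have "\<dots> \<le> T f N" unfolding T_def
      using sum_le_suminf[OF fe_summable[OF f], of "{..<M}"] by simp
    finally show "\<bar>f (trunc M x) - (\<Sum>i<N. ?g i)\<bar> \<le> T f N" .
  qed
  ultimately show ?thesis by (rule LIMSEQ_le_const2)
qed

definition ftr :: "((nat \<Rightarrow> real) \<Rightarrow> real) \<Rightarrow> nat \<Rightarrow> (nat \<Rightarrow> real) \<Rightarrow> real" where
  "ftr f N = (\<lambda>x. if x \<in> c0seq then (\<Sum>i<N. x i * f (unit_vec i)) else 0)"

lemma ftr_props:
  assumes P: "\<Phi> \<in> BD"
  shows "ftr f N \<in> D \<and> \<Phi> (ftr f N) = (\<Sum>i<N. f (unit_vec i) * \<Phi> (delta i))"
proof (induction N)
  case 0
  have "ftr f 0 = (\<lambda>x. 0)" unfolding ftr_def by auto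
  then show ?case using zero_in bid_zero[OF P] by simp
next
  case (Suc N)
  have eq: "ftr f (Suc N) = (\<lambda>x. ftr f N x + f (unit_vec N) * delta N x)"
    unfolding ftr_def delta_def by (auto simp: algebra_simps)
  show ?case unfolding eq using Suc dual_comb[OF _ delta_in] bid_comb[OF P _ delta_in] by simp
qed

lemma REP:
  assumes P: "\<Phi> \<in> BD" and f: "f \<in> D"
  shows "(\<lambda>N. f (trunc N (\<lambda>i. \<Phi> (delta i)))) \<longlonglongrightarrow> \<Phi> f"
proof -
  obtain C where C: "C \<ge> 0" "\<forall>f\<in>D. \<bar>\<Phi> f\<bar> \<le> C * DN f" using bid_C[OF P] by blast
  have bnd: "\<bar>\<Phi> f - \<Phi> (ftr f N)\<bar> \<le> C * T f N" for N
  proof -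
    define g where "g = (\<lambda>x. f x + (-1) * ftr f N x)"
    have g: "g \<in> D" unfolding g_def using dual_comb[OF f] ftr_props[OF P] by blast
    have "\<Phi> g = \<Phi> f + (-1) * \<Phi> (ftr f N)" unfolding g_def
      by (rule bid_comb[OF P f]) (use ftr_props[OF P] in blast)
    moreover have "DN g \<le> T f N"
    proof (rule dual_norm_le[OF g])
      fix x assume x: "x \<in> c0seq" and "RN x \<le> 1"
      then have "\<forall>i. \<bar>x i\<bar> \<le> 1" using RN_ge_c0 order_trans by blast
      then show "\<bar>g x\<bar> \<le> T f N" unfolding g_def ftr_def using tailbound[OF f x] x by simp
    qed
    ultimately show ?thesis using C g by (smt (verit) mult_left_mono)
  qed
  have "(\<lambda>N. \<Phi> f - \<Phi> (ftr f N)) \<longlonglongrightarrow> 0"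
  proof (rule Lim_null_comparison)
    show "\<forall>\<^sub>F N in sequentially. norm (\<Phi> f - \<Phi> (ftr f N)) \<le> C * T f N" using bnd by simp
    show "(\<lambda>N. C * T f N) \<longlonglongrightarrow> 0" using tendsto_mult_right_zero[OF T_lim[OF f]] by simp
  qed
  then have "(\<lambda>N. \<Phi> f - (\<Phi> f - \<Phi> (ftr f N))) \<longlonglongrightarrow> \<Phi> f - 0"
    by (intro tendsto_diff tendsto_const)
  moreover have "\<Phi> (ftr f N) = f (trunc N (\<lambda>i. \<Phi> (delta i)))" for N
    using ftr_props[OF P] f_trunc[OF f] by (simp add: mult.commute)
  ultimately show ?thesis by simp
qed

lemma inner_trunc: "a n < N \<Longrightarrow> seq_inner (trunc N x) (v n) = seq_inner x (v n)"
  unfolding inner_v trunc_def by (intro sum.cong) auto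

lemma sum_abs_le_suminf:
  fixes f g :: "nat \<Rightarrow> real"
  assumes s1: "summable f" and s2: "summable g" and b: "\<And>n. \<bar>f n\<bar> \<le> g n"
  shows "\<bar>suminf f\<bar> \<le> suminf g"
proof -
  have "suminf f \<le> suminf g" by (rule suminf_le[OF _ s1 s2]) (rule order_trans[OF abs_ge_self b])
  moreover have "- suminf f \<le> suminf g"
  proof -
    have "suminf (\<lambda>n. - f n) \<le> suminf g"
      by (rule suminf_le[OF _ summable_minus[OF s1] s2]) (rule order_trans[OF abs_ge_minus_self b])
    then show ?thesis using suminf_minus[OF s1] by simp
  qed
  ultimately show ?thesis by simp
qed

lemma NORM:
  assumes P: "\<Phi> \<in> BD" and B1: "\<forall>f\<in>D. DN f \<le> 1 \<longrightarrow> \<bar>\<Phi> f\<bar> \<le> 1"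
    and bd: "\<forall>i. \<bar>\<Phi> (delta i)\<bar> \<le> 1" and N: "N \<ge> 1"
  shows "RN (trunc N (\<lambda>i. \<Phi> (delta i))) \<le> 1 + 8 * (1/2) ^ N"
proof -
  define \<xi> where "\<xi> = (\<lambda>i. \<Phi> (delta i))"
  have bd': "\<forall>i. \<bar>\<xi> i\<bar> \<le> 1" using bd unfolding \<xi>_def by simp
  define z where "z = trunc N \<xi>"
  have bz: "\<forall>i. \<bar>z i\<bar> \<le> 1" unfolding z_def trunc_def using bd' by simp
  have btr: "\<forall>i. \<bar>trunc M \<xi> i\<bar> \<le> 1" for M unfolding trunc_def using bd' by simp
  define m where "m = Max ((\<lambda>i. \<bar>\<xi> i\<bar>) ` {..<N})"
  have fin: "finite ((\<lambda>i. \<bar>\<xi> i\<bar>) ` {..<N})" "(\<lambda>i. \<bar>\<xi> i\<bar>) ` {..<N} \<noteq> {}" using N by (auto simp: lessThan_empty_iff)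
  obtain i0 where i0: "i0 < N" "m = \<bar>\<xi> i0\<bar>" using Max_in[OF fin] unfolding m_def by auto
  have imax: "\<And>i. i < N \<Longrightarrow> \<bar>\<xi> i\<bar> \<le> \<bar>\<xi> i0\<bar>" using Max_ge[OF fin(1)] i0 unfolding m_def by auto
  define s where "s = sgn (\<xi> i0)"
  define \<sigma> where "\<sigma> = (\<lambda>n. sgn (seq_inner z (v n)))"
  have \<sigma>1: "\<bar>\<sigma> n\<bar> \<le> 1" for n unfolding \<sigma>_def by (simp add: abs_sgn_eq)
  define S where "S = (\<lambda>x. (\<Sum>n. w n * \<sigma> n * seq_inner x (v n)))"
  define g where "g = (\<lambda>x. if x \<in> c0seq then s * x i0 + S x else 0)"
  have summ: "\<forall>i. \<bar>x i\<bar> \<le> B \<Longrightarrow> summable (\<lambda>n. w n * \<sigma> n * seq_inner x (v n))" for x B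
    using summable_terms \<sigma>1 by blast
  have Sbound: "\<bar>S x\<bar> \<le> (\<Sum>n. w n * \<bar>seq_inner x (v n)\<bar>)"
    if B: "\<forall>i. \<bar>x i\<bar> \<le> B" for x B
    unfolding S_def
  proof (rule sum_abs_le_suminf)
    show "summable (\<lambda>n. w n * \<sigma> n * seq_inner x (v n))" by (rule summ[OF B])
    show "summable (\<lambda>n. w n * \<bar>seq_inner x (v n)\<bar>)" by (rule summable_abs_terms[OF B])
    fix n
    show "\<bar>w n * \<sigma> n * seq_inner x (v n)\<bar> \<le> w n * \<bar>seq_inner x (v n)\<bar>"
      using w_pos[of n] \<sigma>1[of n] by (simp add: abs_mult mult_left_le_one_le mult.assoc)
  qed
  have bnd: "\<forall>x\<in>c0seq. \<bar>g x\<bar> \<le> 1 * RN x"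
  proof
    fix x assume x: "x \<in> c0seq"
    obtain B1 where B1: "\<forall>i. \<bar>x i\<bar> \<le> B1" using c0_bounded[OF x] by blast
    have "\<bar>g x\<bar> \<le> \<bar>s * x i0\<bar> + \<bar>S x\<bar>" unfolding g_def using x by simp
    also have "\<dots> \<le> sup_norm x + (\<Sum>n. w n * \<bar>seq_inner x (v n)\<bar>)"
    proof (rule add_mono)
      have "\<bar>s * x i0\<bar> \<le> \<bar>x i0\<bar>" unfolding s_def by (simp add: abs_mult abs_sgn_eq)
      then show "\<bar>s * x i0\<bar> \<le> sup_norm x" using sup_norm_ge[OF B1, of i0] by simp
    qed (rule Sbound[OF B1])
    finally show "\<bar>g x\<bar> \<le> 1 * RN x" unfolding RN_eq by simp
  qed
  have gD: "g \<in> D"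
  proof -
    have add: "\<forall>x\<in>c0seq. \<forall>y\<in>c0seq. g (\<lambda>i. x i + y i) = g x + g y"
    proof (intro ballI)
      fix x y assume x: "x \<in> c0seq" and y: "y \<in> c0seq"
      obtain B1 where B1: "\<forall>i. \<bar>x i\<bar> \<le> B1" using c0_bounded[OF x] by blast
      obtain B2 where B2: "\<forall>i. \<bar>y i\<bar> \<le> B2" using c0_bounded[OF y] by blast
      have "S (\<lambda>i. x i + y i) = S x + S y" unfolding S_def inner_add
        using suminf_add[OF summ[OF B1] summ[OF B2]] by (simp add: algebra_simps)
      then show "g (\<lambda>i. x i + y i) = g x + g y" unfolding g_def using x y c0_add[OF x y]
        by (simp add: algebra_simps)
    qed
    have sc: "\<forall>x\<in>c0seq. \<forall>c. g (\<lambda>i. c * x i) = c * g x"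
    proof (intro ballI allI)
      fix x c assume x: "x \<in> c0seq"
      obtain B1 where B1: "\<forall>i. \<bar>x i\<bar> \<le> B1" using c0_bounded[OF x] by blast
      have "S (\<lambda>i. c * x i) = c * S x" unfolding S_def inner_scale
        using suminf_mult[OF summ[OF B1], of c] by (simp add: algebra_simps)
      then show "g (\<lambda>i. c * x i) = c * g x" unfolding g_def using x c0_scale[OF x]
        by (simp add: algebra_simps)
    qed
    have out: "\<forall>x. x \<notin> c0seq \<longrightarrow> g x = 0" unfolding g_def by simp
    show ?thesis unfolding read_dual_def mem_Collect_eq using add sc bnd out by blast
  qed
  have gN: "DN g \<le> 1"
  proof (rule dual_norm_le[OF gD])
    fix x assume x: "x \<in> c0seq" "RN x \<le> 1"
    show "\<bar>g x\<bar> \<le> 1" using bnd x by auto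
  qed
  have Phig: "(\<lambda>M. g (trunc M \<xi>)) \<longlonglongrightarrow> \<Phi> g" unfolding \<xi>_def by (rule REP[OF P gD])
  have Pg1: "\<Phi> g \<le> 1" using B1 gD gN by fastforce
  have "RN z \<le> g z"
  proof -
    have "sup_norm z \<le> \<bar>\<xi> i0\<bar>"
      by (rule sup_norm_le) (use imax in \<open>auto simp: z_def trunc_def\<close>)
    moreover have "s * z i0 = \<bar>\<xi> i0\<bar>" unfolding s_def z_def trunc_def using i0
      by (simp add: abs_sgn)
    moreover have "S z = (\<Sum>n. w n * \<bar>seq_inner z (v n)\<bar>)" unfolding S_def \<sigma>_def
      by (simp add: abs_sgn ac_simps)
    ultimately show ?thesis unfolding g_def RN_eq using c0_trunc[of N \<xi>] z_def by simp
  qed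
  moreover have "\<forall>M\<ge>N. g z - 8 * (1/2)^N \<le> g (trunc M \<xi>)"
  proof (intro allI impI)
    fix M assume M: "N \<le> M"
    have ti0: "trunc M \<xi> i0 = z i0" using i0 M unfolding z_def trunc_def by simp
    have "g z - g (trunc M \<xi>) = S z - S (trunc M \<xi>)"
      unfolding g_def using ti0 c0_trunc z_def by simp
    also have "\<dots> = (\<Sum>n. w n * \<sigma> n * seq_inner z (v n) - w n * \<sigma> n * seq_inner (trunc M \<xi>) (v n))"
      unfolding S_def by (rule suminf_diff[OF summ[OF bz] summ[OF btr]])
    also have "\<dots> \<le> (\<Sum>n. 4 * (1/2) ^ (N + n))"
    proof (rule suminf_le)
      show "summable (\<lambda>n. w n * \<sigma> n * seq_inner z (v n) - w n * \<sigma> n * seq_inner (trunc M \<xi>) (v n))"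
        by (rule summable_diff[OF summ[OF bz] summ[OF btr]])
      show "summable (\<lambda>n. 4 * (1/2::real) ^ (N + n))" using geo sums_summable by blast
      fix n
      show "w n * \<sigma> n * seq_inner z (v n) - w n * \<sigma> n * seq_inner (trunc M \<xi>) (v n) \<le> 4 * (1/2) ^ (N + n)"
      proof (cases "a n < N")
        case True
        then have "seq_inner z (v n) = seq_inner (trunc M \<xi>) (v n)"
          unfolding z_def using inner_trunc[of n N] inner_trunc[of n M] M by simp
        then show ?thesis by simp
      next
        case False
        have "w n * \<sigma> n * seq_inner z (v n) - w n * \<sigma> n * seq_inner (trunc M \<xi>) (v n)
            \<le> \<bar>w n * \<sigma> n * (seq_inner z (v n) - seq_inner (trunc M \<xi>) (v n))\<bar>"
          by (simp add: algebra_simps)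
        also have "\<dots> \<le> w n * 1 * (1 * (real (a n) + 1) + 1 * (real (a n) + 1))"
        proof -
          have dif: "\<bar>seq_inner z (v n) - seq_inner (trunc M \<xi>) (v n)\<bar> \<le> 1 * (real (a n) + 1) + 1 * (real (a n) + 1)"
            using abs_triangle_ineq4[of "seq_inner z (v n)" "seq_inner (trunc M \<xi>) (v n)"]
              inner_bound[OF bz, of n] inner_bound[OF btr[of M], of n] by linarith
          show ?thesis unfolding abs_mult using w_pos[of n] \<sigma>1[of n] dif
            by (intro mult_mono) auto
        qed
        also have "\<dots> = 2 * (w n * (real (a n) + 1))" by simp
        also have "\<dots> \<le> 2 * (2 * (1/2) ^ (N + n))" using wb[of N n] False by simp
        finally show ?thesis by simp
      qed
    qed
    also have "\<dots> = 8 * (1/2) ^ N" using geo[of 4 N] sums_unique by fastforce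
    finally show "g z - 8 * (1/2)^N \<le> g (trunc M \<xi>)" by simp
  qed
  then have "g z - 8 * (1/2)^N \<le> \<Phi> g"
    by (intro tendsto_lowerbound[OF Phig]) (auto simp: eventually_sequentially)
  ultimately show ?thesis using Pg1 unfolding z_def \<xi>_def by simp
qed

lemma GAP:
  assumes bx: "\<forall>i. \<bar>x i\<bar> \<le> B1" and bY: "\<forall>i. \<bar>y i\<bar> \<le> B2"
    and p: "seq_inner x (v n0) > 0" and q: "seq_inner y (v n0) < 0"
  shows "RN (\<lambda>i. x i + y i) \<le> RN x + RN y - 2 * w n0 * min (seq_inner x (v n0)) (- seq_inner y (v n0))"
proof -
  define m where "m = min (seq_inner x (v n0)) (- seq_inner y (v n0))"
  have bxy: "\<forall>i. \<bar>x i + y i\<bar> \<le> B1 + B2" using bx bY by (simp add: abs_triangle_ineq[THEN order_trans] add_mono)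
  have sup: "sup_norm (\<lambda>i. x i + y i) \<le> sup_norm x + sup_norm y"
    by (rule sup_norm_le) (use sup_norm_ge[OF bx] sup_norm_ge[OF bY] in \<open>auto intro: abs_triangle_ineq[THEN order_trans] add_mono\<close>)
  define G where "G = (\<lambda>n. if n = n0 then 2 * w n0 * m else (0::real))"
  have Gs: "G sums (2 * w n0 * m)" unfolding G_def using sums_single[of n0 "\<lambda>_. 2 * w n0 * m"] by simp
  have sA: "summable (\<lambda>n. w n * \<bar>seq_inner x (v n)\<bar>)" by (rule summable_abs_terms[OF bx])
  have sB: "summable (\<lambda>n. w n * \<bar>seq_inner y (v n)\<bar>)" by (rule summable_abs_terms[OF bY])
  have "(\<Sum>n. w n * \<bar>seq_inner (\<lambda>i. x i + y i) (v n)\<bar>)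
      \<le> (\<Sum>n. w n * \<bar>seq_inner x (v n)\<bar> + w n * \<bar>seq_inner y (v n)\<bar> - G n)"
  proof (rule suminf_le)
    show "summable (\<lambda>n. w n * \<bar>seq_inner (\<lambda>i. x i + y i) (v n)\<bar>)" by (rule summable_abs_terms[OF bxy])
    show "summable (\<lambda>n. w n * \<bar>seq_inner x (v n)\<bar> + w n * \<bar>seq_inner y (v n)\<bar> - G n)"
      by (intro summable_diff summable_add sA sB sums_summable[OF Gs])
    fix n
    have "\<bar>seq_inner x (v n) + seq_inner y (v n)\<bar> \<le> \<bar>seq_inner x (v n)\<bar> + \<bar>seq_inner y (v n)\<bar> - (if n = n0 then 2 * m else 0)"
      using p q unfolding m_def by (cases "n = n0") (auto simp: min_def)
    then have "w n * \<bar>seq_inner x (v n) + seq_inner y (v n)\<bar> \<le> w n * (\<bar>seq_inner x (v n)\<bar> + \<bar>seq_inner y (v n)\<bar> - (if n = n0 then 2 * m else 0))"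
      using w_pos[of n] by (simp add: mult_left_mono)
    then show "w n * \<bar>seq_inner (\<lambda>i. x i + y i) (v n)\<bar> \<le> w n * \<bar>seq_inner x (v n)\<bar> + w n * \<bar>seq_inner y (v n)\<bar> - G n"
      unfolding inner_add G_def by (auto simp: algebra_simps)
  qed
  also have "\<dots> = (\<Sum>n. w n * \<bar>seq_inner x (v n)\<bar>) + (\<Sum>n. w n * \<bar>seq_inner y (v n)\<bar>) - 2 * w n0 * m"
    using suminf_diff[OF summable_add[OF sA sB] sums_summable[OF Gs]] suminf_add[OF sA sB] sums_unique[OF Gs]
    by simp
  finally show ?thesis using sup unfolding RN_eq m_def by simp
qed

lemma BN_mult:
  assumes P: "\<Phi> \<in> BD" and c: "c \<ge> 0" and eq: "\<forall>f\<in>D. \<Psi> f = c * \<Phi> f"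
  shows "BN \<Psi> = c * BN \<Phi>"
proof -
  let ?S = "{f\<in>D. DN f \<le> 1}"
  have ne: "?S \<noteq> {}" using zero_in zero_norm by blast
  have bdd: "bdd_above ((\<lambda>f. \<bar>\<Phi> f\<bar>) ` ?S)" by (rule bid_bdd[OF P])
  then obtain M where M: "\<And>f. f \<in> ?S \<Longrightarrow> \<bar>\<Phi> f\<bar> \<le> M" by (auto simp: bdd_above_def)
  have bdd2: "bdd_above ((\<lambda>f. c * \<bar>\<Phi> f\<bar>) ` ?S)"
    by (rule bdd_aboveI2[of _ _ "c * M"]) (use M c in \<open>auto intro: mult_left_mono\<close>)
  have "BN \<Psi> = (SUP f\<in>?S. c * \<bar>\<Phi> f\<bar>)" unfolding bidual_norm_def
    by (rule SUP_cong) (auto simp: eq abs_mult c)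
  also have "\<dots> = c * (SUP f\<in>?S. \<bar>\<Phi> f\<bar>)"
  proof (cases "c = 0")
    case True then show ?thesis using ne by simp
  next
    case False
    then have c0: "c > 0" using c by simp
    show ?thesis
    proof (rule antisym)
      show "(SUP f\<in>?S. c * \<bar>\<Phi> f\<bar>) \<le> c * (SUP f\<in>?S. \<bar>\<Phi> f\<bar>)"
        by (rule cSUP_least[OF ne]) (use c cSUP_upper[OF _ bdd] in \<open>auto intro: mult_left_mono\<close>)
      have "(SUP f\<in>?S. \<bar>\<Phi> f\<bar>) \<le> (SUP f\<in>?S. c * \<bar>\<Phi> f\<bar>) / c"
      proof (rule cSUP_least[OF ne])
        fix f assume f: "f \<in> ?S"
        have "c * \<bar>\<Phi> f\<bar> \<le> (SUP f\<in>?S. c * \<bar>\<Phi> f\<bar>)" by (rule cSUP_upper[OF f bdd2])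
        then show "\<bar>\<Phi> f\<bar> \<le> (SUP f\<in>?S. c * \<bar>\<Phi> f\<bar>) / c" using c0 by (simp add: field_simps)
      qed
      then show "c * (SUP f\<in>?S. \<bar>\<Phi> f\<bar>) \<le> (SUP f\<in>?S. c * \<bar>\<Phi> f\<bar>)" using c0 by (simp add: field_simps)
    qed
  qed
  finally show ?thesis unfolding bidual_norm_def .
qed

lemma REP_unique:
  assumes P: "\<Phi> \<in> BD" and f: "f \<in> D" and lim: "(\<lambda>N. f (trunc N (\<lambda>i. \<Phi> (delta i)))) \<longlonglongrightarrow> L"
  shows "\<Phi> f = L"
  using LIMSEQ_unique[OF REP[OF P f] lim] .

end

lemma rat_mult_gt:
  fixes c K :: real assumes c: "c \<noteq> 0"
  shows "\<exists>q\<in>\<rat>. q * c > K"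
proof (cases "c > 0")
  case True
  obtain q where q: "q \<in> \<rat>" "K / c < q" "q < K / c + 1" using Rats_dense_in_real[of "K/c" "K/c + 1"] by auto
  then have "K < q * c" using True by (simp add: field_simps)
  then show ?thesis using q by blast
next
  case False
  then have c': "c < 0" using c by simp
  obtain q where q: "q \<in> \<rat>" "K / c - 1 < q" "q < K / c" using Rats_dense_in_real[of "K/c - 1" "K/c"] by auto
  then have "K < q * c" using c' by (simp add: field_simps)
  then show ?thesis using q by blast
qed

lemma rat_near:
  fixes x d :: real assumes "d > 0" shows "\<exists>q\<in>\<rat>. \<bar>q - x\<bar> < d"
proof -
  obtain q where "q \<in> \<rat>" "x - d < q" "q < x + d" using Rats_dense_in_real[of "x - d" "x + d"] assms by auto
  then show ?thesis by (intro bexI[of _ q]) auto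
qed

lemma find_u:
  fixes \<xi> \<eta> :: "nat \<Rightarrow> real"
  assumes nz: "\<exists>i. \<xi> i \<noteq> 0" and np: "\<not> (\<exists>c\<ge>0. \<forall>i. \<eta> i = c * \<xi> i)"
  shows "\<exists>u0\<in>c00Q. seq_inner \<xi> u0 > 1 \<and> seq_inner \<eta> u0 < -1"
proof (cases "\<exists>i j. \<xi> i * \<eta> j \<noteq> \<xi> j * \<eta> i")
  case True
  then obtain i j where ij: "\<xi> i * \<eta> j \<noteq> \<xi> j * \<eta> i" by blast
  then have ineq: "i \<noteq> j" by auto
  define D0 where "D0 = \<xi> i * \<eta> j - \<xi> j * \<eta> i"
  have D0: "D0 \<noteq> 0" using ij unfolding D0_def by simp
  define x0 where "x0 = (2 * \<eta> j + 2 * \<xi> j) / D0"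
  define y0 where "y0 = (- 2 * \<eta> i - 2 * \<xi> i) / D0"
  have ex: "\<xi> i * x0 + \<xi> j * y0 = 2" unfolding x0_def y0_def using D0
    by (simp add: field_simps) (simp add: D0_def algebra_simps)
  have ey: "\<eta> i * x0 + \<eta> j * y0 = -2" unfolding x0_def y0_def using D0
    by (simp add: field_simps) (simp add: D0_def algebra_simps)
  define K where "K = \<bar>\<xi> i\<bar> + \<bar>\<xi> j\<bar> + \<bar>\<eta> i\<bar> + \<bar>\<eta> j\<bar> + 1"
  have K: "K > 0" unfolding K_def by simp
  define d where "d = 1 / (2 * K)"
  have d: "d > 0" unfolding d_def using K by simp
  obtain q where q: "q \<in> \<rat>" "\<bar>q - x0\<bar> < d" using rat_near[OF d] by blast
  obtain p where p: "p \<in> \<rat>" "\<bar>p - y0\<bar> < d" using rat_near[OF d] by blast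
  define u0 where "u0 = (\<lambda>k. if k = i then q else if k = j then p else 0)"
  have u0c: "u0 \<in> c00Q"
  proof -
    have "{k. u0 k \<noteq> 0} \<subseteq> {i, j}" unfolding u0_def by auto
    then have "finite {k. u0 k \<noteq> 0}" by (rule finite_subset) simp
    moreover have "\<forall>k. u0 k \<in> \<rat>" unfolding u0_def using p q by auto
    ultimately show ?thesis unfolding c00Q_def by simp
  qed
  have inner: "seq_inner z u0 = z i * q + z j * p" for z
  proof -
    have "seq_inner z u0 = (\<Sum>k\<in>{i, j}. z k * u0 k)"
      by (rule seq_inner_finite) (auto simp: u0_def)
    then show ?thesis using ineq unfolding u0_def by simp
  qed
  have bnd: "\<bar>z i * (q - x0) + z j * (p - y0)\<bar> \<le> (\<bar>z i\<bar> + \<bar>z j\<bar>) * d" for z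
  proof -
    have "\<bar>z i * (q - x0) + z j * (p - y0)\<bar> \<le> \<bar>z i\<bar> * \<bar>q - x0\<bar> + \<bar>z j\<bar> * \<bar>p - y0\<bar>"
      by (metis abs_mult abs_triangle_ineq)
    also have "\<dots> \<le> \<bar>z i\<bar> * d + \<bar>z j\<bar> * d"
      using p q by (intro add_mono mult_left_mono) auto
    finally show ?thesis by (simp add: algebra_simps)
  qed
  have Kd: "K * d = 1/2" unfolding d_def using K by simp
  have "(\<bar>\<xi> i\<bar> + \<bar>\<xi> j\<bar>) * d \<le> K * d" using d unfolding K_def by (intro mult_right_mono) auto
  then have b1: "\<bar>\<xi> i * (q - x0) + \<xi> j * (p - y0)\<bar> \<le> 1/2" using bnd[of \<xi>] Kd by simp
  have "(\<bar>\<eta> i\<bar> + \<bar>\<eta> j\<bar>) * d \<le> K * d" using d unfolding K_def by (intro mult_right_mono) auto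
  then have b2: "\<bar>\<eta> i * (q - x0) + \<eta> j * (p - y0)\<bar> \<le> 1/2" using bnd[of \<eta>] Kd by simp
  have "seq_inner \<xi> u0 = 2 + (\<xi> i * (q - x0) + \<xi> j * (p - y0))"
    unfolding inner using ex by (simp add: algebra_simps)
  moreover have "seq_inner \<eta> u0 = -2 + (\<eta> i * (q - x0) + \<eta> j * (p - y0))"
    unfolding inner using ey by (simp add: algebra_simps)
  moreover have "- (1/2) \<le> \<xi> i * (q - x0) + \<xi> j * (p - y0)" using b1 abs_le_D2[OF b1] by linarith
  moreover have "\<eta> i * (q - x0) + \<eta> j * (p - y0) \<le> 1/2" using abs_le_D1[OF b2] by linarith
  ultimately have "seq_inner \<xi> u0 > 1" "seq_inner \<eta> u0 < -1" by linarith+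
  then show ?thesis using u0c by (intro bexI[of _ u0]) auto
next
  case False
  then have prp: "\<And>i j. \<xi> i * \<eta> j = \<xi> j * \<eta> i" by blast
  obtain i0 where i0: "\<xi> i0 \<noteq> 0" using nz by blast
  define c where "c = \<eta> i0 / \<xi> i0"
  have eta: "\<forall>k. \<eta> k = c * \<xi> k"
  proof
    fix k
    have "\<xi> i0 * \<eta> k = \<xi> k * \<eta> i0" by (rule prp)
    then show "\<eta> k = c * \<xi> k" unfolding c_def using i0 by (simp add: field_simps)
  qed
  then have cneg: "c < 0" using np by (meson not_le less_imp_le)
  obtain q where q: "q \<in> \<rat>" "q * \<xi> i0 > 1 - 1 / c" using rat_mult_gt[OF i0] by blast
  define u0 where "u0 = (\<lambda>k. if k = i0 then q else 0)"
  have u0c: "u0 \<in> c00Q"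
  proof -
    have "{k. u0 k \<noteq> 0} \<subseteq> {i0}" unfolding u0_def by auto
    then have "finite {k. u0 k \<noteq> 0}" by (rule finite_subset) simp
    moreover have "\<forall>k. u0 k \<in> \<rat>" unfolding u0_def using q by auto
    ultimately show ?thesis unfolding c00Q_def by simp
  qed
  have inner: "seq_inner z u0 = z i0 * q" for z
  proof -
    have "seq_inner z u0 = (\<Sum>k\<in>{i0}. z k * u0 k)"
      by (rule seq_inner_finite) (auto simp: u0_def)
    then show ?thesis unfolding u0_def by simp
  qed
  have c1: "1 - 1/c > 1" using cneg by simp
  have "q * \<xi> i0 > 1" using q(2) c1 by linarith
  then have g1: "seq_inner \<xi> u0 > 1" unfolding inner by (simp add: mult.commute)
  have "c * (q * \<xi> i0) < c * (1 - 1/c)" using q cneg by (simp add: mult_less_cancel_left_neg)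
  then have "seq_inner \<eta> u0 < c - 1" unfolding inner eta[rule_format, of i0] using cneg
    by (simp add: algebra_simps)
  then show ?thesis using g1 u0c cneg by (intro bexI[of _ u0]) auto
qed

theorem theorem2p4:
  fixes u :: "nat \<Rightarrow> nat \<Rightarrow> real" and a :: "nat \<Rightarrow> nat"
  assumes u_c00: "\<And>n. u n \<in> c00Q"
    and u_enum: "\<And>v. v \<in> c00Q \<Longrightarrow> infinite {n. u n = v}"
    and a_mono: "strict_mono a"
    and a_pos: "\<And>n. a n > 0"
    and a_supp: "\<And>n i. u n i \<noteq> 0 \<Longrightarrow> i < a n"
    and a_l1: "\<And>n. l1_norm (u n) < real (a n)"
    and X: "X \<in> read_bidual u a" and Y: "Y \<in> read_bidual u a"
    and X1: "bidual_norm u a X = 1" and Y1: "bidual_norm u a Y = 1"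
    and XY: "\<exists>f\<in>read_dual u a. X f \<noteq> Y f"
  shows "bidual_norm u a (\<lambda>f. X f + Y f) < 2"
proof -
  interpret R: readsp u a by unfold_locales (use assms in auto)
  define \<xi> where "\<xi> = (\<lambda>i. X (delta i))"
  define \<eta> where "\<eta> = (\<lambda>i. Y (delta i))"
  have B1X: "\<forall>f\<in>R.D. R.DN f \<le> 1 \<longrightarrow> \<bar>X f\<bar> \<le> 1" using R.bid_norm_ge[OF X] X1 by fastforce
  have B1Y: "\<forall>f\<in>R.D. R.DN f \<le> 1 \<longrightarrow> \<bar>Y f\<bar> \<le> 1" using R.bid_norm_ge[OF Y] Y1 by fastforce
  have bdX: "\<forall>i. \<bar>\<xi> i\<bar> \<le> 1" unfolding \<xi>_def using B1X R.delta_in R.delta_norm by blast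
  have bdY: "\<forall>i. \<bar>\<eta> i\<bar> \<le> 1" unfolding \<eta>_def using B1Y R.delta_in R.delta_norm by blast
  have repX: "\<And>f. f \<in> R.D \<Longrightarrow> (\<lambda>N. f (trunc N \<xi>)) \<longlonglongrightarrow> X f" unfolding \<xi>_def by (rule R.REP[OF X])
  have repY: "\<And>f. f \<in> R.D \<Longrightarrow> (\<lambda>N. f (trunc N \<eta>)) \<longlonglongrightarrow> Y f" unfolding \<eta>_def by (rule R.REP[OF Y])
  have nz: "\<exists>i. \<xi> i \<noteq> 0"
  proof (rule ccontr)
    assume "\<not> (\<exists>i. \<xi> i \<noteq> 0)"
    then have "\<And>N. trunc N \<xi> = (\<lambda>i. 0)" unfolding trunc_def by auto
    then have z0: "\<forall>f\<in>R.D. X f = 0 * X f"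
      using repX R.dual_zero LIMSEQ_unique[OF _ tendsto_const] by fastforce
    have "R.BN X = 0 * R.BN X" using R.BN_mult[OF X, of 0 X] z0 by simp
    then show False using X1 by simp
  qed
  have np: "\<not> (\<exists>c\<ge>0. \<forall>i. \<eta> i = c * \<xi> i)"
  proof
    assume "\<exists>c\<ge>0. \<forall>i. \<eta> i = c * \<xi> i"
    then obtain c where c: "c \<ge> 0" "\<forall>i. \<eta> i = c * \<xi> i" by blast
    have YX: "\<forall>f\<in>R.D. Y f = c * X f"
    proof
      fix f assume f: "f \<in> R.D"
      have "\<And>N. trunc N \<eta> = (\<lambda>i. c * trunc N \<xi> i)" unfolding trunc_def using c by auto
      then have "\<And>N. f (trunc N \<eta>) = c * f (trunc N \<xi>)" using R.dual_scale[OF f c0_trunc] by simp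
      then have "(\<lambda>N. f (trunc N \<eta>)) \<longlonglongrightarrow> c * X f" using tendsto_mult_left[OF repX[OF f]] by simp
      then show "Y f = c * X f" using LIMSEQ_unique repY[OF f] by blast
    qed
    have "R.BN Y = c * R.BN X" by (rule R.BN_mult[OF X c(1) YX])
    then have "c = 1" using X1 Y1 by simp
    then show False using YX XY by simp
  qed
  obtain u0 where u0: "u0 \<in> c00Q" "seq_inner \<xi> u0 > 1" "seq_inner \<eta> u0 < -1"
    using find_u[OF nz np] by blast
  obtain n0 where n0: "u n0 = u0"
    using u_enum[OF u0(1)] by (metis (mono_tags, lifting) empty_Collect_eq finite.emptyI)
  define p where "p = seq_inner \<xi> (R.v n0)"
  define q where "q = seq_inner \<eta> (R.v n0)"
  have p: "p > 0" unfolding p_def R.inner_v_split n0 using u0 bdX[rule_format, of "a n0"] by linarith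
  have q: "q < 0" unfolding q_def R.inner_v_split n0 using u0 bdY[rule_format, of "a n0"] by linarith
  define m where "m = min p (- q)"
  have m: "m > 0" unfolding m_def using p q by simp
  define E where "E = 2 * R.w n0 * m"
  have E: "E > 0" unfolding E_def using m R.w_pos by simp
  have main: "\<bar>X f + Y f\<bar> \<le> 2 - E" if f: "f \<in> R.D" and fn: "R.DN f \<le> 1" for f
  proof -
    have lim1: "(\<lambda>N. \<bar>f (trunc N \<xi>) + f (trunc N \<eta>)\<bar>) \<longlonglongrightarrow> \<bar>X f + Y f\<bar>"
      by (intro tendsto_rabs tendsto_add repX repY f)
    have lim2: "(\<lambda>N. 2 + 16 * (1/2::real) ^ N - E) \<longlonglongrightarrow> 2 + 16 * 0 - E"
      by (intro tendsto_diff tendsto_add tendsto_mult tendsto_const LIMSEQ_power_zero) simp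
    have "\<forall>N\<ge>a n0 + 1. \<bar>f (trunc N \<xi>) + f (trunc N \<eta>)\<bar> \<le> 2 + 16 * (1/2::real) ^ N - E"
    proof (intro allI impI)
      fix N assume N: "a n0 + 1 \<le> N"
      have bt1: "\<forall>i. \<bar>trunc N \<xi> i\<bar> \<le> 1" unfolding trunc_def using bdX by simp
      have bt2: "\<forall>i. \<bar>trunc N \<eta> i\<bar> \<le> 1" unfolding trunc_def using bdY by simp
      have pN: "seq_inner (trunc N \<xi>) (R.v n0) = p" unfolding p_def using N by (intro R.inner_trunc) simp
      have qN: "seq_inner (trunc N \<eta>) (R.v n0) = q" unfolding q_def using N by (intro R.inner_trunc) simp
      have tz: "trunc N (\<lambda>i. \<xi> i + \<eta> i) = (\<lambda>i. trunc N \<xi> i + trunc N \<eta> i)" unfolding trunc_def by auto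
      have "f (trunc N \<xi>) + f (trunc N \<eta>) = f (trunc N (\<lambda>i. \<xi> i + \<eta> i))"
        unfolding tz using R.dual_add[OF f c0_trunc c0_trunc] by simp
      then have "\<bar>f (trunc N \<xi>) + f (trunc N \<eta>)\<bar> \<le> R.DN f * R.RN (trunc N (\<lambda>i. \<xi> i + \<eta> i))"
        using R.dual_bound[OF f c0_trunc] by simp
      also have "\<dots> \<le> 1 * R.RN (trunc N (\<lambda>i. \<xi> i + \<eta> i))"
        using fn R.RN_nonneg_c0[OF c0_trunc] by (intro mult_right_mono) auto
      also have "\<dots> \<le> R.RN (trunc N \<xi>) + R.RN (trunc N \<eta>) - E"
        unfolding tz E_def m_def using R.GAP[OF bt1 bt2, of n0] pN qN p q by simp
      also have "\<dots> \<le> (1 + 8 * (1/2)^N) + (1 + 8 * (1/2)^N) - E"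
        using R.NORM[OF X B1X, of N] R.NORM[OF Y B1Y, of N] N bdX bdY
        unfolding \<xi>_def \<eta>_def by (intro diff_right_mono add_mono) auto
      finally show "\<bar>f (trunc N \<xi>) + f (trunc N \<eta>)\<bar> \<le> 2 + 16 * (1/2::real) ^ N - E" by simp
    qed
    then have "\<bar>X f + Y f\<bar> \<le> 2 + 16 * 0 - E" by (intro LIMSEQ_le[OF lim1 lim2]) blast
    then show ?thesis by simp
  qed
  have "bidual_norm u a (\<lambda>f. X f + Y f) \<le> 2 - E"
    unfolding bidual_norm_def
  proof (rule cSUP_least)
    show "{f \<in> R.D. R.DN f \<le> 1} \<noteq> {}" using R.zero_in R.zero_norm by blast
  qed (use main in auto)
  then show ?thesis using E by simp
qed


end
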